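(* With $\Delta$ and $\mathcal{T}$ as in the context, for every $\sigma\in\mathcal{T}$ one has the co-associativity identity $$(\Delta\otimes\mathrm{Id})\Delta\sigma=(\mathrm{Id}\otimes\Delta)\Delta\sigma,$$ both sides being regarded as elements of $\mathrm{Vec}(\mathcal{T})\otimes\mathrm{Alg}(\mathcal{T}^{\mathrm{cen}})\otimes\mathrm{Alg}(\mathcal{T}^{\mathrm{cen}})$.
   Context: Fix $d\ge1$, $\delta>0$. Trees: $\widehat{\mathcal{T}}_r$ is the smallest set containing the generators $\mathbf{1},\mathbf{X}_1,\dots,\mathbf{X}_d,\Xi$ and closed under $(\tau_1,\tau_2,\tau_3)\mapsto\mathcal{I}(\tau_1)\mathcal{I}(\tau_2)\mathcal{I}(\tau_3)$, a formal non-commutative "tree product" of three "planted trees" $\mathcal{I}(\tau_k)$. Orders: $|\mathbf{1}|=-2$, $|\mathbf{X}_i|=-1$, $|\Xi|=-3+\delta$, $|\mathcal{I}(\tau_1)\mathcal{I}(\tau_2)\mathcal{I}(\tau_3)|=6+\sum_k|\tau_k|$, $|\mathcal{I}(\tau)|=|\tau|+2$. Let $\mathrm{Poly}=\{\mathbf{1},\mathbf{X}_1,\dots,\mathbf{X}_d\}$, $\mathcal{W}=\{\tau:|\tau|<-2\}$, $\mathcal{N}=\{\tau:-2\le|\tau|\le0\}$, $\mathring{\mathcal{N}}=\mathcal{N}\setminus\mathrm{Poly}$, $\widetilde{\mathcal{N}}=\{\tau\in\mathring{\mathcal{N}}:-1<|\tau|<0\}$. Standing assumption: $\delta$ is such that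 no tree in $\mathcal{W}\cup\mathring{\mathcal{N}}$ has integer order. Further symbols $\mathcal{I}^+_i(\tau)$, $1\le i\le d$, $\tau\in\widetilde{\mathcal{N}}\cup\{\mathbf{X}_i\}$ (planted trees of order $|\tau|+1$), with conventions $\mathcal{I}^+_i(\mathbf{X}_j)=0$ for $j\ne i$ and $\mathcal{I}^+_i(\tau)=0$ for $\tau\in\mathring{\mathcal{N}}\setminus\widetilde{\mathcal{N}}$. Set $\mathcal{T}_r=\mathcal{W}\cup\mathring{\mathcal{N}}$, $\mathcal{T}_l=\{\mathcal{I}(\tau):\tau\in\mathcal{T}_r\cup\mathrm{Poly}\}$, $\mathcal{T}=\mathcal{T}_r\cup\mathcal{T}_l$, $\mathcal{T}^{\mathrm{cen}}=\{\mathcal{I}(\tau):\tau\in\mathcal{N}\}\cup\{\mathcal{I}^+_i(\tau):1\le i\le d,\ \tau\in\widetilde{\mathcal{N}}\cup\{\mathbf{X}_i\}\}$, $\mathcal{T}_+=\mathcal{T}\cup\mathcal{T}^{\mathrm{cen}}$. Truncation convention: if $|\sigma_1|+|\sigma_2|+|\sigma_3|>0$ for planted trees $\sigma_k$ then the tree product $\sigma_1\sigma_2\sigma_3$ is $0$; tree products, $\mathcal{I}$, $\mathcal{I}^+_i$ extend (multi)linearly. $\mathrm{Vec}(S)$ is the real vector space with basis $S$; $\mathrm{Alg}(S)$ is the free unital non-commutative real algebra generated by a set $S$ of planted trees (product $\cdot$, the "forest product"; unit $1$, the empty forest). The coproduct $\Delta:\mathcal{T}_+\to\mathrm{Vec}(\mathcal{T}_+)\otimes\mathrm{Alg}(\mathcal{T}^{\mathrm{cen}})$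 is defined recursively by: $\Delta\mathcal{I}(\mathbf{1})=\mathcal{I}(\mathbf{1})\otimes\mathcal{I}(\mathbf{1})$; $\Delta\mathcal{I}(\mathbf{X}_i)=\mathcal{I}(\mathbf{1})\otimes\mathcal{I}(\mathbf{X}_i)+\mathcal{I}(\mathbf{X}_i)\otimes\mathcal{I}^+_i(\mathbf{X}_i)$; $\Delta\mathcal{I}^+_i(\mathbf{X}_i)=\mathcal{I}^+_i(\mathbf{X}_i)\otimes\mathcal{I}^+_i(\mathbf{X}_i)$; $\Delta w=w\otimes1$, $\Delta\mathcal{I}(w)=\mathcal{I}(w)\otimes1$ for $w\in\mathcal{W}$; for $\tau\in\mathring{\mathcal{N}}$: $\Delta\mathcal{I}(\tau)=\mathcal{I}(\mathbf{1})\otimes\mathcal{I}(\tau)+\sum_{i=1}^d\mathcal{I}(\mathbf{X}_i)\otimes\mathcal{I}^+_i(\tau)+(\mathcal{I}\otimes\mathrm{Id})\Delta\tau$; for $\tau\in\widetilde{\mathcal{N}}$: $\Delta\mathcal{I}^+_i(\tau)=\mathcal{I}^+_i(\mathbf{X}_i)\otimes\mathcal{I}^+_i(\tau)+(\mathcal{I}^+_i\otimes\mathrm{Id})\Delta\tau$; for $\mathcal{I}(\tau_1)\mathcal{I}(\tau_2)\mathcal{I}(\tau_3)\in\mathring{\mathcal{N}}$: $\Delta(\mathcal{I}(\tau_1)\mathcal{I}(\tau_2)\mathcal{I}(\tau_3))=\Delta\mathcal{I}(\tau_1)\Delta\mathcal{I}(\tau_2)\Delta\mathcal{I}(\tau_3)$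 with $\prod_k(\sigma_k\otimes a_k):=\sigma_1\sigma_2\sigma_3\otimes a_1\cdot a_2\cdot a_3$ extended linearly. $\Delta$ is extended linearly, and to forests multiplicatively: $\Delta1=1\otimes1$ and $\Delta(\sigma_1\cdots\sigma_n)=(\Delta\sigma_1)\cdots(\Delta\sigma_n)$ with componentwise forest product; thus $\Delta$ acts on $\mathrm{Alg}(\mathcal{T}^{\mathrm{cen}})$. *)

theory Defs
  imports Complex_Main
begin

text \<open>Trees of the regularity structure: One = the polynomial 1, X i = X_i,
  Xi = the noise, Prod a b c = the tree product I(a) I(b) I(c).\<close>
datatype tr = One | X nat | Xi | Prod tr tr tr

text \<open>Planted trees: PI t = I(t), PIp i t = I^+_i(t).\<close>
datatype pl = PI tr | PIp nat tr

text \<open>Basis of Vec(T_+): a tree or a planted tree.\<close>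
datatype el = ETr tr | EPl pl

text \<open>Well-formed trees (elements of the hatted T_r): indices of X between 1 and d.\<close>
fun wf :: "nat \<Rightarrow> tr \<Rightarrow> bool" where
  "wf d One = True"
| "wf d (X i) = (1 \<le> i \<and> i \<le> d)"
| "wf d Xi = True"
| "wf d (Prod a b c) = (wf d a \<and> wf d b \<and> wf d c)"

fun ord :: "real \<Rightarrow> tr \<Rightarrow> real" where
  "ord \<delta> One = -2"
| "ord \<delta> (X i) = -1"
| "ord \<delta> Xi = -3 + \<delta>"
| "ord \<delta> (Prod a b c) = 6 + ord \<delta> a + ord \<delta> b + ord \<delta> c"

definition isPoly :: "nat \<Rightarrow> tr \<Rightarrow> bool" where
  "isPoly d t \<longleftrightarrow> t = One \<or> (\<exists>i. 1 \<le> i \<and> i \<le> d \<and> t = X i)"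

definition inW :: "real \<Rightarrow> tr \<Rightarrow> bool" where
  "inW \<delta> t \<longleftrightarrow> ord \<delta> t < -2"

definition inN :: "real \<Rightarrow> tr \<Rightarrow> bool" where
  "inN \<delta> t \<longleftrightarrow> -2 \<le> ord \<delta> t \<and> ord \<delta> t \<le> 0"

definition inNo :: "real \<Rightarrow> nat \<Rightarrow> tr \<Rightarrow> bool" where
  "inNo \<delta> d t \<longleftrightarrow> inN \<delta> t \<and> \<not> isPoly d t"

definition inNt :: "real \<Rightarrow> nat \<Rightarrow> tr \<Rightarrow> bool" where
  "inNt \<delta> d t \<longleftrightarrow> inNo \<delta> d t \<and> -1 < ord \<delta> t \<and> ord \<delta> t < 0"

text \<open>I^+_i(t) is a nonzero basis element only for t in N-tilde or t = X_i;
  otherwise it is 0 (convention).\<close>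
definition Ipnz :: "real \<Rightarrow> nat \<Rightarrow> nat \<Rightarrow> tr \<Rightarrow> bool" where
  "Ipnz \<delta> d i t \<longleftrightarrow> t = X i \<or> inNt \<delta> d t"

text \<open>The set T = T_r \<union> T_l (as elements of el).\<close>
definition inT :: "real \<Rightarrow> nat \<Rightarrow> el \<Rightarrow> bool" where
  "inT \<delta> d s \<longleftrightarrow>
     (\<exists>t. s = ETr t \<and> wf d t \<and> (inW \<delta> t \<or> inNo \<delta> d t)) \<or>
     (\<exists>t. s = EPl (PI t) \<and> wf d t \<and> (inW \<delta> t \<or> inNo \<delta> d t \<or> isPoly d t))"

text \<open>Elements of free vector spaces are represented by finite lists of
  (coefficient, basis element) pairs; two such lists represent the same vector
  iff they have the same coefficient function.\<close>
definition vec :: "(real \<times> 'b) list \<Rightarrow> 'b \<Rightarrow> real" where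
  "vec L b = sum_list (map fst (filter (\<lambda>x. snd x = b) L))"

text \<open>Tree product of three planted trees I(s1) I(s2) I(s3), with truncation
  (zero if the sum of their orders is > 0), extended multilinearly, tensored with
  forest products on the right.\<close>
definition tprod :: "real \<Rightarrow> (real \<times> tr \<times> pl list) list \<Rightarrow> (real \<times> tr \<times> pl list) list
    \<Rightarrow> (real \<times> tr \<times> pl list) list \<Rightarrow> (real \<times> tr \<times> pl list) list" where
  "tprod \<delta> A B C =
     [(c1 * c2 * c3, Prod s1 s2 s3, w1 @ w2 @ w3).
        (c1, s1, w1) \<leftarrow> A, (c2, s2, w2) \<leftarrow> B, (c3, s3, w3) \<leftarrow> C,
        \<not> ((ord \<delta> s1 + 2) + (ord \<delta> s2 + 2) + (ord \<delta> s3 + 2) > 0)]"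

text \<open>Delta I(t), given D = Delta t; an entry (c, s, w) stands for c I(s) \<otimes> w.\<close>
definition dI_of :: "real \<Rightarrow> nat \<Rightarrow> tr \<Rightarrow> (real \<times> tr \<times> pl list) list
    \<Rightarrow> (real \<times> tr \<times> pl list) list" where
  "dI_of \<delta> d t D =
     (case t of
        One \<Rightarrow> [(1, One, [PI One])]
      | X i \<Rightarrow> [(1, One, [PI (X i)]), (1, X i, [PIp i (X i)])]
      | _ \<Rightarrow> (if inW \<delta> t then [(1, t, [])]
              else [(1, One, [PI t])]
                   @ [(1, X i, [PIp i t]). i \<leftarrow> [1..<d+1], Ipnz \<delta> d i t]
                   @ D))"

text \<open>Delta on trees of T_r; an entry (c, s, w) stands for c s \<otimes> w.\<close>
fun dT :: "real \<Rightarrow> nat \<Rightarrow> tr \<Rightarrow> (real \<times> tr \<times> pl list) list" where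
  "dT \<delta> d (Prod a b c) =
     (if inW \<delta> (Prod a b c) then [(1, Prod a b c, [])]
      else tprod \<delta> (dI_of \<delta> d a (dT \<delta> d a)) (dI_of \<delta> d b (dT \<delta> d b))
                   (dI_of \<delta> d c (dT \<delta> d c)))"
| "dT \<delta> d t = [(1, t, [])]"

definition dI :: "real \<Rightarrow> nat \<Rightarrow> tr \<Rightarrow> (real \<times> tr \<times> pl list) list" where
  "dI \<delta> d t = dI_of \<delta> d t (dT \<delta> d t)"

text \<open>Delta I^+_i(t); entries (c, p, w) stand for c p \<otimes> w with p a planted tree.\<close>
definition dIp :: "real \<Rightarrow> nat \<Rightarrow> nat \<Rightarrow> tr \<Rightarrow> (real \<times> pl \<times> pl list) list" where
  "dIp \<delta> d i t =
     (if t = X i then [(1, PIp i (X i), [PIp i (X i)])]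
      else if inNt \<delta> d t then
        (1, PIp i (X i), [PIp i t]) #
        [(c, PIp i s, w). (c, s, w) \<leftarrow> dT \<delta> d t, Ipnz \<delta> d i s]
      else [])"

definition copP :: "real \<Rightarrow> nat \<Rightarrow> pl \<Rightarrow> (real \<times> pl \<times> pl list) list" where
  "copP \<delta> d p =
     (case p of
        PI t \<Rightarrow> [(c, PI s, w). (c, s, w) \<leftarrow> dI \<delta> d t]
      | PIp i t \<Rightarrow> dIp \<delta> d i t)"

definition cop :: "real \<Rightarrow> nat \<Rightarrow> el \<Rightarrow> (real \<times> el \<times> pl list) list" where
  "cop \<delta> d s =
     (case s of
        ETr t \<Rightarrow> [(c, ETr u, w). (c, u, w) \<leftarrow> dT \<delta> d t]
      | EPl p \<Rightarrow> [(c, EPl q, w). (c, q, w) \<leftarrow> copP \<delta> d p])"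

fun copW :: "real \<Rightarrow> nat \<Rightarrow> pl list \<Rightarrow> (real \<times> pl list \<times> pl list) list" where
  "copW \<delta> d [] = [(1, [], [])]"
| "copW \<delta> d (p # ps) =
     [(c * c', q # l, w @ w'). (c, q, w) \<leftarrow> copP \<delta> d p, (c', l, w') \<leftarrow> copW \<delta> d ps]"

definition lhs :: "real \<Rightarrow> nat \<Rightarrow> el \<Rightarrow> (real \<times> el \<times> pl list \<times> pl list) list" where
  "lhs \<delta> d s = [(c * c', e', w', w). (c, e, w) \<leftarrow> cop \<delta> d s, (c', e', w') \<leftarrow> cop \<delta> d e]"

definition rhs :: "real \<Rightarrow> nat \<Rightarrow> el \<Rightarrow> (real \<times> el \<times> pl list \<times> pl list) list" where
  "rhs \<delta> d s = [(c * c', e, w1, w2). (c, e, w) \<leftarrow> cop \<delta> d s, (c', w1, w2) \<leftarrow> copW \<delta> d w]"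

end

theory Submission imports Defs "HOL-Library.Multiset" begin

definition msum :: "'a multiset \<Rightarrow> ('a \<Rightarrow> 'b multiset) \<Rightarrow> 'b multiset" where
  "msum M f = (\<Sum>x\<in>#M. f x)"

lemma msum_empty[simp]: "msum {#} f = {#}" by (simp add: msum_def)
lemma msum_add_mset[simp]: "msum (add_mset x M) f = f x + msum M f" by (simp add: msum_def)
lemma msum_union[simp]: "msum (M + N) f = msum M f + msum N f" by (simp add: msum_def)
lemma msum_plus: "msum M (\<lambda>x. f x + g x) = msum M f + msum M g"
  by (induction M) (simp_all add: ac_simps)
lemma msum_zero[simp]: "msum M (\<lambda>x. {#}) = {#}" by (induction M) simp_all
lemma msum_assoc: "msum (msum M f) g = msum M (\<lambda>x. msum (f x) g)"
  by (induction M) simp_all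
lemma msum_swap: "msum M (\<lambda>x. msum N (f x)) = msum N (\<lambda>y. msum M (\<lambda>x. f x y))"
  unfolding msum_def by (rule sum_mset.swap)
lemma msum_cong: "(\<And>x. x \<in># M \<Longrightarrow> f x = g x) \<Longrightarrow> msum M f = msum M g"
  unfolding msum_def by (metis image_mset_cong)
lemma msum_if: "msum M (\<lambda>x. if P then f x else {#}) = (if P then msum M f else {#})"
  by simp
lemma msum_if_arg: "msum (if P then M1 else M2) f = (if P then msum M1 f else msum M2 f)"
  by simp
lemma image_mset_if: "image_mset f (if P then M1 else M2) = (if P then image_mset f M1 else image_mset f M2)"
  by simp
lemma msum_single_id[simp]: "msum M (\<lambda>x. {#x#}) = M" by (induction M) simp_all
lemma msum_single[simp]: "msum M (\<lambda>x. {#f x#}) = image_mset f M" by (induction M) simp_all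
lemma msum_image: "msum (image_mset g M) f = msum M (\<lambda>x. f (g x))" by (induction M) simp_all
lemma image_msum: "image_mset h (msum M f) = msum M (\<lambda>x. image_mset h (f x))" by (induction M) simp_all
lemma mset_concat_map[simp]: "mset (concat (map f xs)) = msum (mset xs) (\<lambda>x. mset (f x))"
  by (induction xs) simp_all

lemma vec_eq_mset: "vec L b = sum_mset (image_mset fst (filter_mset (\<lambda>x. snd x = b) (mset L)))"
  unfolding vec_def by (metis mset_filter mset_map sum_mset_sum_list)

lemma vec_mset: "mset L = mset L' \<Longrightarrow> vec L = vec L'"
  by (rule ext) (simp add: vec_eq_mset)

definition tprodM :: "real \<Rightarrow> (real \<times> tr \<times> pl list) multiset \<Rightarrow> (real \<times> tr \<times> pl list) multiset
    \<Rightarrow> (real \<times> tr \<times> pl list) multiset \<Rightarrow> (real \<times> tr \<times> pl list) multiset" where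
  "tprodM \<delta> A B C = msum A (\<lambda>(c1, s1, w1). msum B (\<lambda>(c2, s2, w2). msum C (\<lambda>(c3, s3, w3).
      if \<not> ((ord \<delta> s1 + 2) + (ord \<delta> s2 + 2) + (ord \<delta> s3 + 2) > 0)
      then {#(c1 * c2 * c3, Prod s1 s2 s3, w1 @ w2 @ w3)#} else {#})))"

lemma mset_tprod: "mset (tprod \<delta> A B C) = tprodM \<delta> (mset A) (mset B) (mset C)"
  unfolding tprod_def tprodM_def
  by (simp add: split_beta' if_distrib[of mset] cong: if_cong)

lemma ord_gt: "\<delta> > 0 \<Longrightarrow> ord \<delta> t > -3"
  by (induction t) auto

lemma set_tprod: "x \<in> set (tprod \<delta> A B C) \<Longrightarrow> \<exists>c1 s1 w1 c2 s2 w2 c3 s3 w3.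
   (c1, s1, w1) \<in> set A \<and> (c2, s2, w2) \<in> set B \<and> (c3, s3, w3) \<in> set C \<and>
   \<not> ((ord \<delta> s1 + 2) + (ord \<delta> s2 + 2) + (ord \<delta> s3 + 2) > 0) \<and>
   x = (c1 * c2 * c3, Prod s1 s2 s3, w1 @ w2 @ w3)"
  unfolding tprod_def by (auto split: if_splits) blast

lemma dI_of_other: "t \<noteq> One \<Longrightarrow> (\<And>i. t \<noteq> X i) \<Longrightarrow> dI_of \<delta> d t D = (if inW \<delta> t then [(1, t, [])] else
     [(1, One, [PI t])] @ [(1, X i, [PIp i t]). i \<leftarrow> [1..<d+1], Ipnz \<delta> d i t] @ D)"
  unfolding dI_of_def by (cases t) (simp_all only: tr.case, blast+)

lemma dI_One: "dI \<delta> d One = [(1, One, [PI One])]"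
  by (simp add: dI_def dI_of_def)
lemma dI_X: "dI \<delta> d (X i) = [(1, One, [PI (X i)]), (1, X i, [PIp i (X i)])]"
  by (simp add: dI_def dI_of_def)
lemma dI_W: assumes "t \<noteq> One" "\<And>i. t \<noteq> X i" "inW \<delta> t" shows "dI \<delta> d t = [(1, t, [])]"
  by (simp only: dI_def dI_of_other[OF assms(1,2)] assms(3) if_True)
lemma dI_N: assumes "t \<noteq> One" "\<And>i. t \<noteq> X i" "\<not> inW \<delta> t" shows "dI \<delta> d t =
     [(1, One, [PI t])] @ [(1, X i, [PIp i t]). i \<leftarrow> [1..<d+1], Ipnz \<delta> d i t] @ dT \<delta> d t"
  by (simp only: dI_def dI_of_other[OF assms(1,2)] assms(3) if_False)
lemmas dI_simps = dI_One dI_X dI_W dI_N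

lemma left_ord:
  "(\<forall>x\<in>set (dT \<delta> d t). ord \<delta> (fst (snd x)) \<le> ord \<delta> t) \<and>
   (\<forall>x\<in>set (dI \<delta> d t). ord \<delta> (fst (snd x)) \<le> ord \<delta> t)"
proof (induction t)
  case (Prod a b c)
  have T: "\<forall>x\<in>set (dT \<delta> d (Prod a b c)). ord \<delta> (fst (snd x)) \<le> ord \<delta> (Prod a b c)"
  proof
    fix x assume x: "x \<in> set (dT \<delta> d (Prod a b c))"
    show "ord \<delta> (fst (snd x)) \<le> ord \<delta> (Prod a b c)"
    proof (cases "inW \<delta> (Prod a b c)")
      case True then show ?thesis using x by simp
    next
      case False
      then have "x \<in> set (tprod \<delta> (dI \<delta> d a) (dI \<delta> d b) (dI \<delta> d c))" using x by (simp add: dI_def)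
      then show ?thesis using Prod.IH by (fastforce dest!: set_tprod)
    qed
  qed
  moreover have "\<forall>x\<in>set (dI \<delta> d (Prod a b c)). ord \<delta> (fst (snd x)) \<le> ord \<delta> (Prod a b c)"
  proof (cases "inW \<delta> (Prod a b c)")
    case True then show ?thesis by (simp add: dI_simps)
  next
    case False
    then show ?thesis using T by (auto simp: dI_simps inW_def Ipnz_def inNt_def)
  qed
  ultimately show ?case by blast
next
  case Xi then show ?case by (cases "inW \<delta> Xi") (auto simp: dI_simps inW_def Ipnz_def inNt_def)
qed (auto simp: dI_simps)

lemma left_shape:
  "x \<in> set (dT \<delta> d t) \<Longrightarrow> (\<exists>a b c. fst (snd x) = Prod a b c) \<or> fst (snd x) = t"
  by (cases t) (auto split: if_splits dest!: set_tprod)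

lemma left_notW:
  assumes "\<delta> > 0"
  shows "(\<not> inW \<delta> t \<longrightarrow> (\<forall>x\<in>set (dT \<delta> d t). \<not> inW \<delta> (fst (snd x)))) \<and>
   (\<forall>x\<in>set (dI \<delta> d t). inW \<delta> (fst (snd x)) \<longrightarrow> fst (snd x) = t)"
proof (induction t)
  case (Prod a b c)
  have T: "\<not> inW \<delta> (Prod a b c) \<longrightarrow> (\<forall>x\<in>set (dT \<delta> d (Prod a b c)). \<not> inW \<delta> (fst (snd x)))"
  proof (intro impI ballI)
    fix x assume nW: "\<not> inW \<delta> (Prod a b c)" and x: "x \<in> set (dT \<delta> d (Prod a b c))"
    then have "x \<in> set (tprod \<delta> (dI \<delta> d a) (dI \<delta> d b) (dI \<delta> d c))" by (simp add: dI_def)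
    then obtain c1 s1 w1 c2 s2 w2 c3 s3 w3 where m: "(c1, s1, w1) \<in> set (dI \<delta> d a)"
      "(c2, s2, w2) \<in> set (dI \<delta> d b)" "(c3, s3, w3) \<in> set (dI \<delta> d c)"
      and xe: "x = (c1 * c2 * c3, Prod s1 s2 s3, w1 @ w2 @ w3)" by (blast dest: set_tprod)
    show "\<not> inW \<delta> (fst (snd x))"
    proof
      assume W: "inW \<delta> (fst (snd x))"
      have g: "ord \<delta> s1 > -3" "ord \<delta> s2 > -3" "ord \<delta> s3 > -3" using ord_gt assms by auto
      have "inW \<delta> s1" "inW \<delta> s2" "inW \<delta> s3" using W g by (auto simp: xe inW_def)
      then have "s1 = a" "s2 = b" "s3 = c" using Prod.IH m by fastforce+
      then show False using W nW xe by simp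
    qed
  qed
  moreover have "\<forall>x\<in>set (dI \<delta> d (Prod a b c)). inW \<delta> (fst (snd x)) \<longrightarrow> fst (snd x) = Prod a b c"
  proof (cases "inW \<delta> (Prod a b c)")
    case True then show ?thesis by (simp add: dI_simps)
  next
    case False
    then show ?thesis using T by (auto simp: dI_simps inW_def)
  qed
  ultimately show ?case by blast
next
  case Xi then show ?case by (cases "inW \<delta> Xi") (auto simp: dI_simps inW_def)
qed (auto simp: dI_simps inW_def)

lemma dT_Prod:
  assumes "\<delta> > 0"
  shows "dT \<delta> d (Prod a b c) = tprod \<delta> (dI \<delta> d a) (dI \<delta> d b) (dI \<delta> d c)"
proof (cases "inW \<delta> (Prod a b c)")
  case False then show ?thesis by (simp add: dI_def)
next
  case True
  have g: "ord \<delta> a > -3" "ord \<delta> b > -3" "ord \<delta> c > -3" using ord_gt assms by auto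
  have W: "inW \<delta> a" "inW \<delta> b" "inW \<delta> c" using True g by (auto simp: inW_def)
  have "dI \<delta> d t = [(1, t, [])]" if "inW \<delta> t" for t
    using that by (cases t) (auto simp: dI_simps inW_def)
  then show ?thesis using W True by (simp add: tprod_def inW_def)
qed

lemma mset_copW_Cons: "mset (copW \<delta> d (p # ps)) = msum (mset (copP \<delta> d p)) (\<lambda>(c, q, w).
    msum (mset (copW \<delta> d ps)) (\<lambda>(c', l, w'). {#(c * c', q # l, w @ w')#}))"
  by (simp add: split_beta')

lemma mset_copW_append: "mset (copW \<delta> d (x @ y)) = msum (mset (copW \<delta> d x)) (\<lambda>(c, l, v).
    msum (mset (copW \<delta> d y)) (\<lambda>(c', l', v'). {#(c * c', l @ l', v @ v')#}))"
proof (induction x)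
  case Nil
  show ?case by (simp add: split_beta')
next
  case (Cons p ps)
  show ?case
    unfolding append_Cons mset_copW_Cons Cons msum_assoc
    by (simp add: split_beta' msum_assoc image_msum msum_image mult.assoc multiset.map_comp o_def)
qed

lemma mset_copW_single: "mset (copW \<delta> d [p]) = image_mset (\<lambda>(c, q, w). (c, [q], w)) (mset (copP \<delta> d p))"
  by (simp add: split_beta')

lemma msum_swap3: "msum M (\<lambda>p. msum N (\<lambda>q. msum K (\<lambda>r. f p q r))) =
    msum K (\<lambda>r. msum M (\<lambda>p. msum N (\<lambda>q. f p q r)))"
proof -
  have "msum M (\<lambda>p. msum N (\<lambda>q. msum K (\<lambda>r. f p q r))) =
        msum M (\<lambda>p. msum K (\<lambda>r. msum N (\<lambda>q. f p q r)))"
    by (rule msum_cong) (rule msum_swap)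
  also have "\<dots> = msum K (\<lambda>r. msum M (\<lambda>p. msum N (\<lambda>q. f p q r)))"
    by (rule msum_swap)
  finally show ?thesis .
qed

definition t3 :: "real \<Rightarrow> real \<times> tr \<times> pl list \<times> pl list \<Rightarrow> real \<times> tr \<times> pl list \<times> pl list
   \<Rightarrow> real \<times> tr \<times> pl list \<times> pl list \<Rightarrow> (real \<times> tr \<times> pl list \<times> pl list) multiset" where
  "t3 \<delta> p q r = (if \<not> ((ord \<delta> (fst (snd p)) + 2) + (ord \<delta> (fst (snd q)) + 2) + (ord \<delta> (fst (snd r)) + 2) > 0)
     then {#(fst p * fst q * fst r, Prod (fst (snd p)) (fst (snd q)) (fst (snd r)),
             fst (snd (snd p)) @ fst (snd (snd q)) @ fst (snd (snd r)),
             snd (snd (snd p)) @ snd (snd (snd q)) @ snd (snd (snd r)))#} else {#})"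

definition T3 where
  "T3 \<delta> M N K = msum M (\<lambda>p. msum N (\<lambda>q. msum K (\<lambda>r. t3 \<delta> p q r)))"

lemma T3_msum: "T3 \<delta> (msum A F) (msum B G) (msum C H) =
   msum A (\<lambda>x. msum B (\<lambda>y. msum C (\<lambda>z. T3 \<delta> (F x) (G y) (H z))))"
proof -
  have "T3 \<delta> (msum A F) (msum B G) (msum C H) = msum A (\<lambda>x. msum (F x) (\<lambda>p. msum B (\<lambda>y.
     msum (G y) (\<lambda>q. msum C (\<lambda>z. msum (H z) (\<lambda>r. t3 \<delta> p q r))))))"
    unfolding T3_def by (simp add: msum_assoc)
  also have "\<dots> = msum A (\<lambda>x. msum B (\<lambda>y. msum (F x) (\<lambda>p.
     msum (G y) (\<lambda>q. msum C (\<lambda>z. msum (H z) (\<lambda>r. t3 \<delta> p q r))))))"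
    by (rule msum_cong) (rule msum_swap)
  also have "\<dots> = msum A (\<lambda>x. msum B (\<lambda>y. msum C (\<lambda>z. msum (F x) (\<lambda>p.
     msum (G y) (\<lambda>q. msum (H z) (\<lambda>r. t3 \<delta> p q r))))))"
    by (rule msum_cong)+ (rule msum_swap3)
  finally show ?thesis unfolding T3_def .
qed

lemma T3_single: "T3 \<delta> {#p#} {#q#} {#r#} = t3 \<delta> p q r"
  by (simp add: T3_def)

lemma T3_image: "T3 \<delta> (image_mset f M) (image_mset g N) (image_mset h K) =
   msum M (\<lambda>x. msum N (\<lambda>y. msum K (\<lambda>z. t3 \<delta> (f x) (g y) (h z))))"
  using T3_msum[of \<delta> M "\<lambda>x. {#f x#}" N "\<lambda>x. {#g x#}" K "\<lambda>x. {#h x#}"]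
  by (simp add: T3_single)

definition LT where
  "LT \<delta> d M = msum M (\<lambda>x. image_mset (\<lambda>y. (fst x * fst y, fst (snd y), snd (snd y), snd (snd x)))
      (mset (dT \<delta> d (fst (snd x)))))"
definition LI where
  "LI \<delta> d M = msum M (\<lambda>x. image_mset (\<lambda>y. (fst x * fst y, fst (snd y), snd (snd y), snd (snd x)))
      (mset (dI \<delta> d (fst (snd x)))))"
definition RR :: "real \<Rightarrow> nat \<Rightarrow> (real \<times> 'a \<times> pl list) multiset \<Rightarrow> (real \<times> 'a \<times> pl list \<times> pl list) multiset" where
  "RR \<delta> d M = msum M (\<lambda>x. image_mset (\<lambda>y. (fst x * fst y, fst (snd x), fst (snd y), snd (snd y)))
      (mset (copW \<delta> d (snd (snd x)))))"

lemma RR_tprod: "RR \<delta> d (tprodM \<delta> A B C) = T3 \<delta> (RR \<delta> d A) (RR \<delta> d B) (RR \<delta> d C)"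
proof -
  have "T3 \<delta> (RR \<delta> d A) (RR \<delta> d B) (RR \<delta> d C) = msum A (\<lambda>x. msum B (\<lambda>y. msum C (\<lambda>z.
    T3 \<delta> (image_mset (\<lambda>y. (fst x * fst y, fst (snd x), fst (snd y), snd (snd y))) (mset (copW \<delta> d (snd (snd x)))))
     (image_mset (\<lambda>ya. (fst y * fst ya, fst (snd y), fst (snd ya), snd (snd ya))) (mset (copW \<delta> d (snd (snd y)))))
     (image_mset (\<lambda>y. (fst z * fst y, fst (snd z), fst (snd y), snd (snd y))) (mset (copW \<delta> d (snd (snd z))))))))"
    unfolding RR_def by (rule T3_msum)
  also have "\<dots> = RR \<delta> d (tprodM \<delta> A B C)"
    unfolding T3_image RR_def tprodM_def
    by (simp add: split_beta' msum_assoc image_msum msum_image mult_ac multiset.map_comp o_def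
         mset_copW_append t3_def msum_if msum_if_arg cong: if_cong)
  finally show ?thesis by simp
qed

lemma LT_tprod:
  assumes "\<delta> > 0"
    and ok: "\<And>x y z. x \<in># A \<Longrightarrow> y \<in># B \<Longrightarrow> z \<in># C \<Longrightarrow>
       \<not> ((ord \<delta> (fst (snd x)) + 2) + (ord \<delta> (fst (snd y)) + 2) + (ord \<delta> (fst (snd z)) + 2) > 0)"
  shows "LT \<delta> d (tprodM \<delta> A B C) = T3 \<delta> (LI \<delta> d A) (LI \<delta> d B) (LI \<delta> d C)"
proof -
  have "LT \<delta> d (tprodM \<delta> A B C) = msum A (\<lambda>x. msum B (\<lambda>y. msum C (\<lambda>z.
     image_mset (\<lambda>v. (fst x * fst y * fst z * fst v, fst (snd v), snd (snd v), snd (snd x) @ snd (snd y) @ snd (snd z)))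
     (mset (dT \<delta> d (Prod (fst (snd x)) (fst (snd y)) (fst (snd z))))))))"
    unfolding LT_def tprodM_def
    apply (simp add: split_beta' msum_assoc image_msum msum_image multiset.map_comp o_def msum_if msum_if_arg cong: if_cong)
    apply (intro msum_cong)
    using ok by simp
  also have "\<dots> = T3 \<delta> (LI \<delta> d A) (LI \<delta> d B) (LI \<delta> d C)"
    unfolding LI_def T3_msum T3_image dT_Prod[OF assms(1)] mset_tprod
    by (simp add: tprodM_def image_mset_if split_beta' msum_assoc image_msum msum_image
         mult_ac multiset.map_comp o_def t3_def msum_if msum_if_arg cong: if_cong)
  finally show ?thesis .
qed

definition XsM :: "real \<Rightarrow> nat \<Rightarrow> tr \<Rightarrow> (real \<times> tr \<times> pl list) multiset" where
  "XsM \<delta> d t = msum (mset [1..<d+1]) (\<lambda>i. if Ipnz \<delta> d i t then {#(1, X i, [PIp i t])#} else {#})"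

lemma mset_Xs: "mset [(1::real, X i, [PIp i t]). i \<leftarrow> [1..<d+1], Ipnz \<delta> d i t] = XsM \<delta> d t"
proof -
  have "mset [(1::real, X i, [PIp i t]). i \<leftarrow> xs, Ipnz \<delta> d i t] =
     msum (mset xs) (\<lambda>i. if Ipnz \<delta> d i t then {#(1, X i, [PIp i t])#} else {#})" for xs
    by (induction xs) auto
  then show ?thesis unfolding XsM_def .
qed



definition TC where "TC \<delta> d t \<longleftrightarrow> LT \<delta> d (mset (dT \<delta> d t)) = RR \<delta> d (mset (dT \<delta> d t))"
definition PC where "PC \<delta> d t \<longleftrightarrow> LI \<delta> d (mset (dI \<delta> d t)) = RR \<delta> d (mset (dI \<delta> d t))"

lemma msum_add_mset_fun: "msum M (\<lambda>x. add_mset (f x) (g x)) = image_mset f M + msum M g"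
  by (induction M) (simp_all add: ac_simps)

lemma TC_triv: "dT \<delta> d t = [(1, t, [])] \<Longrightarrow> TC \<delta> d t"
  unfolding TC_def LT_def RR_def by simp

lemma TC_Prod:
  assumes "\<delta> > 0" "ord \<delta> (Prod a b c) \<le> 0" "PC \<delta> d a" "PC \<delta> d b" "PC \<delta> d c"
  shows "TC \<delta> d (Prod a b c)"
proof -
  have ok: "\<not> ((ord \<delta> (fst (snd x)) + 2) + (ord \<delta> (fst (snd y)) + 2) + (ord \<delta> (fst (snd z)) + 2) > 0)"
    if "x \<in># mset (dI \<delta> d a)" "y \<in># mset (dI \<delta> d b)" "z \<in># mset (dI \<delta> d c)" for x y z
    using that left_ord[of \<delta> d a] left_ord[of \<delta> d b] left_ord[of \<delta> d c] assms(2) by force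
  have "LT \<delta> d (tprodM \<delta> (mset (dI \<delta> d a)) (mset (dI \<delta> d b)) (mset (dI \<delta> d c))) =
     T3 \<delta> (LI \<delta> d (mset (dI \<delta> d a))) (LI \<delta> d (mset (dI \<delta> d b))) (LI \<delta> d (mset (dI \<delta> d c)))"
    by (rule LT_tprod[OF assms(1)]) (rule ok)
  then show ?thesis
    unfolding TC_def dT_Prod[OF assms(1)] mset_tprod RR_tprod
    using assms(3-5) unfolding PC_def by simp
qed


lemma PC_One: "PC \<delta> d One"
  unfolding PC_def LI_def RR_def by (simp add: dI_One mset_copW_single copP_def)

lemma PC_X: "PC \<delta> d (X i)"
  unfolding PC_def LI_def RR_def by (simp add: dI_One dI_X mset_copW_single copP_def dIp_def add_mset_commute)

lemma PC_W: assumes "inW \<delta> t" shows "PC \<delta> d t"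
proof -
  have "t \<noteq> One" "\<And>i. t \<noteq> X i" using assms by (auto simp: inW_def)
  then show ?thesis using assms unfolding PC_def LI_def RR_def by (simp add: dI_W)
qed


lemma PC_N:
  assumes dpos: "\<delta> > 0" and t1: "t \<noteq> One" and t2: "\<And>i. t \<noteq> X i" and nW: "\<not> inW \<delta> t"
    and tc: "TC \<delta> d t"
    and Ip: "\<And>i x. x \<in> set (dT \<delta> d t) \<Longrightarrow> Ipnz \<delta> d i (fst (snd x)) \<Longrightarrow> Ipnz \<delta> d i t"
  shows "PC \<delta> d t"
proof -
  define D where "D = mset (dT \<delta> d t)"
  define I where "I = mset [1..<d+1]"
  have MI: "mset (dI \<delta> d t) = add_mset (1, One, [PI t]) (XsM \<delta> d t + D)"
    by (simp only: dI_N[OF t1 t2 nW] mset_append mset_Xs) (simp add: D_def)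
  have MIs: "mset (dI \<delta> d (fst (snd x))) = add_mset (1, One, [PI (fst (snd x))])
      (XsM \<delta> d (fst (snd x)) + mset (dT \<delta> d (fst (snd x))))" if "x \<in># D" for x
  proof -
    have xs: "x \<in> set (dT \<delta> d t)" using that D_def by simp
    have a: "fst (snd x) \<noteq> One" "\<And>i. fst (snd x) \<noteq> X i"
      using left_shape[OF xs] t1 t2 by auto
    have b: "\<not> inW \<delta> (fst (snd x))" using left_notW[OF dpos, of t d] nW xs by blast
    show ?thesis by (simp only: dI_N[OF a b] mset_append mset_Xs) simp
  qed
  define A1 where "A1 = msum I (\<lambda>i. if Ipnz \<delta> d i t then {#(1::real, One, [PI (X i)], [PIp i t])#} else {#})"
  define A2 where "A2 = msum I (\<lambda>i. if Ipnz \<delta> d i t then {#(1::real, X i, [PIp i (X i)], [PIp i t])#} else {#})"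
  define B1 where "B1 = msum D (\<lambda>x. {#(fst x, One, [PI (fst (snd x))], snd (snd x))#})"
  define B2 where "B2 = msum D (\<lambda>x. msum I (\<lambda>i. if Ipnz \<delta> d i (fst (snd x))
      then {#(fst x, X i, [PIp i (fst (snd x))], snd (snd x))#} else {#}))"
  define B2' where "B2' = msum I (\<lambda>i. if Ipnz \<delta> d i t then msum D (\<lambda>x. if Ipnz \<delta> d i (fst (snd x))
      then {#(fst x, X i, [PIp i (fst (snd x))], snd (snd x))#} else {#}) else {#})"
  have L1: "LI \<delta> d (mset (dI \<delta> d t)) = add_mset (1, One, [PI One], [PI t]) (LI \<delta> d (XsM \<delta> d t) + LI \<delta> d D)"
    unfolding MI LI_def by (simp add: dI_One)
  have L2: "LI \<delta> d (XsM \<delta> d t) = A1 + A2"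
    unfolding A1_def A2_def XsM_def LI_def I_def[symmetric] msum_assoc
    by (simp add: dI_X msum_plus[symmetric] msum_if_arg cong: if_cong) (rule msum_cong; simp)
  have L3: "LI \<delta> d D = B1 + B2 + LT \<delta> d D"
  proof -
    have "LI \<delta> d D = msum D (\<lambda>x. image_mset (\<lambda>y. (fst x * fst y, fst (snd y), snd (snd y), snd (snd x)))
      (add_mset (1, One, [PI (fst (snd x))]) (XsM \<delta> d (fst (snd x)) + mset (dT \<delta> d (fst (snd x))))))"
      unfolding LI_def by (rule msum_cong) (simp add: MIs)
    also have "\<dots> = B1 + B2 + LT \<delta> d D"
      unfolding B1_def B2_def LT_def XsM_def I_def[symmetric]
      by (simp add: msum_plus msum_add_mset_fun image_msum image_mset_if msum_if_arg cong: if_cong)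
    finally show ?thesis .
  qed
  have R1: "RR \<delta> d (mset (dI \<delta> d t)) = RR \<delta> d {#(1, One, [PI t])#} + RR \<delta> d (XsM \<delta> d t) + RR \<delta> d D"
    unfolding MI RR_def by simp
  have R2: "RR \<delta> d {#(1::real, One, [PI t])#} = add_mset (1, One, [PI One], [PI t]) (A1 + B1)"
  proof -
    have "RR \<delta> d {#(1::real, One, [PI t])#} = image_mset (\<lambda>v. (fst v, One, [PI (fst (snd v))], snd (snd v))) (mset (dI \<delta> d t))"
      unfolding RR_def by (simp add: mset_copW_single copP_def split_beta' multiset.map_comp o_def)
    also have "\<dots> = add_mset (1, One, [PI One], [PI t]) (A1 + B1)"
      unfolding MI A1_def B1_def XsM_def I_def[symmetric]
      by (simp add: image_msum image_mset_if msum_if_arg cong: if_cong)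
    finally show ?thesis .
  qed
  have R3: "RR \<delta> d (XsM \<delta> d t) = A2 + B2'"
  proof -
    have dIp: "mset (dIp \<delta> d i t) = add_mset (1, PIp i (X i), [PIp i t]) (msum D (\<lambda>x.
        if Ipnz \<delta> d i (fst (snd x)) then {#(fst x, PIp i (fst (snd x)), snd (snd x))#} else {#}))"
      if "Ipnz \<delta> d i t" for i
    proof -
      have "inNt \<delta> d t" using that t2 by (simp add: Ipnz_def)
      then show ?thesis using t2[of i] unfolding dIp_def D_def
        by (simp add: split_beta' if_distrib[of mset] cong: if_cong)
    qed
    show ?thesis
      unfolding XsM_def RR_def msum_assoc A2_def B2'_def I_def[symmetric]
      apply (simp add: msum_plus[symmetric] msum_if_arg cong: if_cong)
      apply (rule msum_cong)
      apply (simp add: mset_copW_single copP_def dIp image_msum image_mset_if split_beta' multiset.map_comp o_def cong: if_cong)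
      done
  qed
  have B2: "B2 = B2'"
  proof -
    have "B2 = msum I (\<lambda>i. msum D (\<lambda>x. if Ipnz \<delta> d i (fst (snd x))
      then {#(fst x, X i, [PIp i (fst (snd x))], snd (snd x))#} else {#}))"
      unfolding B2_def by (rule msum_swap)
    also have "\<dots> = B2'"
      unfolding B2'_def
    proof (rule msum_cong)
      fix i
      show "msum D (\<lambda>x. if Ipnz \<delta> d i (fst (snd x))
      then {#(fst x, X i, [PIp i (fst (snd x))], snd (snd x))#} else {#}) = (if Ipnz \<delta> d i t then msum D (\<lambda>x. if Ipnz \<delta> d i (fst (snd x))
      then {#(fst x, X i, [PIp i (fst (snd x))], snd (snd x))#} else {#}) else {#})"
      proof (cases "Ipnz \<delta> d i t")
        case False
        then have "msum D (\<lambda>x. if Ipnz \<delta> d i (fst (snd x))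
          then {#(fst x, X i, [PIp i (fst (snd x))], snd (snd x))#} else {#}) = msum D (\<lambda>x. {#})"
          by (intro msum_cong) (use Ip D_def in auto)
        then show ?thesis using False by simp
      qed simp
    qed
    finally show ?thesis .
  qed
  have "LT \<delta> d D = RR \<delta> d D" using tc unfolding TC_def D_def .
  then show ?thesis unfolding PC_def L1 L2 L3 R1 R2 R3 B2 by (simp add: ac_simps)
qed


lemma Ip_Prod:
  assumes dpos: "\<delta> > 0"
    and H: "\<forall>t. wf d t \<and> (inW \<delta> t \<or> inNo \<delta> d t) \<and> t \<noteq> Prod One One One \<longrightarrow> ord \<delta> t \<notin> \<int>"
    and wf: "wf d (Prod a b c)" and nW: "\<not> inW \<delta> (Prod a b c)" and o: "ord \<delta> (Prod a b c) \<le> 0"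
    and x: "x \<in> set (dT \<delta> d (Prod a b c))" and ip: "Ipnz \<delta> d i (fst (snd x))"
  shows "Ipnz \<delta> d i (Prod a b c)"
proof -
  have sX: "fst (snd x) \<noteq> X i" using left_shape[OF x] by auto
  then have nt: "inNt \<delta> d (fst (snd x))" using ip by (simp add: Ipnz_def)
  have le: "ord \<delta> (fst (snd x)) \<le> ord \<delta> (Prod a b c)" using left_ord[of \<delta> d "Prod a b c"] x by blast
  show ?thesis
  proof (cases "Prod a b c = Prod One One One")
    case True
    have "fst (snd x) = Prod One One One" using x
      unfolding True dT_Prod[OF dpos] dI_One tprod_def by (auto split: if_splits)
    then show ?thesis using nt by (simp add: inNt_def)
  next
    case False
    have no: "inNo \<delta> d (Prod a b c)" using nW o by (simp add: inNo_def inN_def inW_def isPoly_def)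
    then have "ord \<delta> (Prod a b c) \<notin> \<int>" using H wf False by blast
    then have "ord \<delta> (Prod a b c) \<noteq> 0" by (metis Ints_0)
    then have "inNt \<delta> d (Prod a b c)" using no o le nt by (simp add: inNt_def)
    then show ?thesis by (simp add: Ipnz_def)
  qed
qed

lemma main:
  assumes dpos: "\<delta> > 0"
    and H: "\<forall>t. wf d t \<and> (inW \<delta> t \<or> inNo \<delta> d t) \<and> t \<noteq> Prod One One One \<longrightarrow> ord \<delta> t \<notin> \<int>"
  shows "wf d t \<Longrightarrow> ord \<delta> t \<le> 0 \<Longrightarrow> TC \<delta> d t \<and> PC \<delta> d t"
proof (induction t)
  case One then show ?case by (simp add: TC_triv PC_One)
next
  case (X i) then show ?case by (simp add: TC_triv PC_X)
next
  case Xi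
  have tc: "TC \<delta> d Xi" by (simp add: TC_triv)
  moreover have "PC \<delta> d Xi"
  proof (cases "inW \<delta> Xi")
    case True then show ?thesis by (rule PC_W)
  next
    case False show ?thesis by (rule PC_N[OF dpos _ _ False tc]) auto
  qed
  ultimately show ?case ..
next
  case (Prod a b c)
  have g: "ord \<delta> a > -3" "ord \<delta> b > -3" "ord \<delta> c > -3" using ord_gt dpos by auto
  have "ord \<delta> a \<le> 0" "ord \<delta> b \<le> 0" "ord \<delta> c \<le> 0" using Prod.prems(2) g by auto
  moreover have "wf d a" "wf d b" "wf d c" using Prod.prems(1) by auto
  ultimately have pc: "PC \<delta> d a" "PC \<delta> d b" "PC \<delta> d c" using Prod.IH by blast+
  have tc: "TC \<delta> d (Prod a b c)" by (rule TC_Prod[OF dpos Prod.prems(2) pc])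
  moreover have "PC \<delta> d (Prod a b c)"
  proof (cases "inW \<delta> (Prod a b c)")
    case True then show ?thesis by (rule PC_W)
  next
    case False show ?thesis
      by (rule PC_N[OF dpos _ _ False tc]) (auto intro: Ip_Prod[OF dpos H Prod.prems(1) False Prod.prems(2)])
  qed
  ultimately show ?case ..
qed

theorem lemma4p6:
  fixes \<delta> :: real and d :: nat and \<sigma> :: el
  assumes "d \<ge> 1" and "\<delta> > 0"
    and "\<forall>t. wf d t \<and> (inW \<delta> t \<or> inNo \<delta> d t) \<and> t \<noteq> Prod One One One
              \<longrightarrow> ord \<delta> t \<notin> \<int>"
    and "inT \<delta> d \<sigma>"
  shows "vec (lhs \<delta> d \<sigma>) = vec (rhs \<delta> d \<sigma>)"
proof (rule vec_mset)
  from assms(4) consider (T) t where "\<sigma> = ETr t" "wf d t" "ord \<delta> t \<le> 0"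
    | (P) t where "\<sigma> = EPl (PI t)" "wf d t" "ord \<delta> t \<le> 0"
    unfolding inT_def by (auto simp: inW_def inNo_def inN_def isPoly_def)
  then show "mset (lhs \<delta> d \<sigma>) = mset (rhs \<delta> d \<sigma>)"
  proof cases
    case T
    have "TC \<delta> d t" using main[OF assms(2,3) T(2,3)] by blast
    then have e: "LT \<delta> d (mset (dT \<delta> d t)) = RR \<delta> d (mset (dT \<delta> d t))" by (simp add: TC_def)
    let ?g = "\<lambda>v::real \<times> tr \<times> pl list \<times> pl list. (fst v, ETr (fst (snd v)), snd (snd v))"
    have "mset (lhs \<delta> d \<sigma>) = image_mset ?g (LT \<delta> d (mset (dT \<delta> d t)))"
      unfolding T(1) lhs_def LT_def cop_def
      by (simp add: split_beta' image_msum msum_image multiset.map_comp o_def)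
    moreover have "mset (rhs \<delta> d \<sigma>) = image_mset ?g (RR \<delta> d (mset (dT \<delta> d t)))"
      unfolding T(1) rhs_def RR_def cop_def
      by (simp add: split_beta' image_msum msum_image multiset.map_comp o_def)
    ultimately show ?thesis using e by simp
  next
    case P
    have "PC \<delta> d t" using main[OF assms(2,3) P(2,3)] by blast
    then have e: "LI \<delta> d (mset (dI \<delta> d t)) = RR \<delta> d (mset (dI \<delta> d t))" by (simp add: PC_def)
    let ?g = "\<lambda>v::real \<times> tr \<times> pl list \<times> pl list. (fst v, EPl (PI (fst (snd v))), snd (snd v))"
    have "mset (lhs \<delta> d \<sigma>) = image_mset ?g (LI \<delta> d (mset (dI \<delta> d t)))"
      unfolding P(1) lhs_def LI_def cop_def copP_def
      by (simp add: split_beta' image_msum msum_image multiset.map_comp o_def)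
    moreover have "mset (rhs \<delta> d \<sigma>) = image_mset ?g (RR \<delta> d (mset (dI \<delta> d t)))"
      unfolding P(1) rhs_def RR_def cop_def copP_def
      by (simp add: split_beta' image_msum msum_image multiset.map_comp o_def)
    ultimately show ?thesis using e by simp
  qed
qed

end
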